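(* Let $G$ be a connected graph and let $x\in V(G)$ be a vertex with $d(x)=\Delta(G)\le |G|-2$. If $V(G)\setminus N[x]$ is an independent set in $G$, then $G$ admits an antimagic orientation.
   Context: All graphs are finite and simple; $|G|$ is the number of vertices, $\Delta(G)$ the maximum degree, $N(v)$ the set of neighbours of $v$, and $N[v]=N(v)\cup\{v\}$. For a digraph $D$ and an injective map $\tau$ from the arc set $A(D)$ to positive integers, $s_{(D,\tau)}(u)$ is the sum of labels of arcs entering $u$ minus the sum of labels of arcs leaving $u$ ($0$ if $u$ is isolated). If $D$ has $m$ arcs, a bijection $\tau:A(D)\to\{1,\dots,m\}$ is an antimagic labeling if the values $s_{(D,\tau)}(u)$ are pairwise distinct over all vertices. $G$ admits an antimagic orientation if some orientation $D$ of $G$ has an antimagic labeling. *)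

theory Defs
  imports Main
begin

definition simple_graph :: "'a set \<Rightarrow> 'a set set \<Rightarrow> bool" where
  "simple_graph V E \<longleftrightarrow> finite V \<and> (\<forall>e\<in>E. \<exists>u v. e = {u, v} \<and> u \<noteq> v \<and> u \<in> V \<and> v \<in> V)"

definition neighbors :: "'a set set \<Rightarrow> 'a \<Rightarrow> 'a set" where
  "neighbors E v = {u. {u, v} \<in> E}"

definition degree :: "'a set set \<Rightarrow> 'a \<Rightarrow> nat" where
  "degree E v = card (neighbors E v)"

definition max_degree :: "'a set \<Rightarrow> 'a set set \<Rightarrow> nat" where
  "max_degree V E = Max (degree E ` V)"

definition connected_graph :: "'a set \<Rightarrow> 'a set set \<Rightarrow> bool" where
  "connected_graph V E \<longleftrightarrow> V \<noteq> {} \<and>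
     (\<forall>u\<in>V. \<forall>v\<in>V. (u, v) \<in> {(a, b). {a, b} \<in> E}\<^sup>*)"

definition independent_set :: "'a set set \<Rightarrow> 'a set \<Rightarrow> bool" where
  "independent_set E S \<longleftrightarrow> (\<forall>u\<in>S. \<forall>v\<in>S. {u, v} \<notin> E)"

definition is_orientation :: "'a set set \<Rightarrow> ('a \<times> 'a) set \<Rightarrow> bool" where
  "is_orientation E D \<longleftrightarrow>
     (\<forall>(u, v)\<in>D. {u, v} \<in> E) \<and>
     (\<forall>e\<in>E. \<exists>!a\<in>D. e = {fst a, snd a})"

definition vertex_sum :: "('a \<times> 'a) set \<Rightarrow> ('a \<times> 'a \<Rightarrow> nat) \<Rightarrow> 'a \<Rightarrow> int" where
  "vertex_sum D \<tau> u =
     (\<Sum>a\<in>{a\<in>D. snd a = u}. int (\<tau> a)) - (\<Sum>a\<in>{a\<in>D. fst a = u}. int (\<tau> a))"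

definition antimagic_labeling :: "'a set \<Rightarrow> ('a \<times> 'a) set \<Rightarrow> ('a \<times> 'a \<Rightarrow> nat) \<Rightarrow> bool" where
  "antimagic_labeling V D \<tau> \<longleftrightarrow>
     bij_betw \<tau> D {1..card D} \<and> inj_on (vertex_sum D \<tau>) V"

definition has_antimagic_orientation :: "'a set \<Rightarrow> 'a set set \<Rightarrow> bool" where
  "has_antimagic_orientation V E \<longleftrightarrow>
     (\<exists>D \<tau>. is_orientation E D \<and> antimagic_labeling V D \<tau>)"

end

theory Submission
  imports Defs
begin


lemma vs_Un:
  assumes "finite A" "finite B" "A \<inter> B = {}"
  shows "vertex_sum (A \<union> B) \<tau> u = vertex_sum A \<tau> u + vertex_sum B \<tau> u"
proof -
  have 1: "{a \<in> A \<union> B. snd a = u} = {a\<in>A. snd a = u} \<union> {a\<in>B. snd a = u}" by auto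
  have 2: "{a \<in> A \<union> B. fst a = u} = {a\<in>A. fst a = u} \<union> {a\<in>B. fst a = u}" by auto
  show ?thesis unfolding vertex_sum_def 1 2
    using assms by (simp add: sum.union_disjoint disjoint_iff)
qed

lemma vs_cong:
  assumes "\<forall>a\<in>D. \<tau> a = \<tau>' a"
  shows "vertex_sum D \<tau> u = vertex_sum D \<tau>' u"
  unfolding vertex_sum_def using assms by (intro arg_cong2[where f="(-)"] sum.cong) auto

lemma vs_notouch:
  assumes "\<forall>a\<in>D. fst a \<noteq> u \<and> snd a \<noteq> u"
  shows "vertex_sum D \<tau> u = 0"
proof -
  have h: "{a\<in>D. snd a = u} = {}" "{a\<in>D. fst a = u} = {}" using assms by auto
  show ?thesis unfolding vertex_sum_def h by simp
qed

lemma vs_heads: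
  assumes "\<forall>a\<in>D. fst a \<noteq> u"
  shows "vertex_sum D \<tau> u \<ge> 0"
proof -
  have h: "{a\<in>D. fst a = u} = {}" using assms by auto
  show ?thesis unfolding vertex_sum_def h by (simp add: sum_nonneg)
qed

lemma vs_tails:
  assumes "\<forall>a\<in>D. snd a \<noteq> u"
  shows "vertex_sum D \<tau> u = - (\<Sum>a\<in>{a\<in>D. fst a = u}. int (\<tau> a))"
proof -
  have h: "{a\<in>D. snd a = u} = {}" using assms by auto
  show ?thesis unfolding vertex_sum_def h by simp
qed

lemma vs_insert:
  assumes "finite D" "a \<notin> D"
  shows "vertex_sum (insert a D) \<tau> u = vertex_sum D \<tau> u
     + (if snd a = u then int (\<tau> a) else 0) - (if fst a = u then int (\<tau> a) else 0)"
proof -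
  have "vertex_sum (D \<union> {a}) \<tau> u = vertex_sum D \<tau> u + vertex_sum {a} \<tau> u"
    using assms by (intro vs_Un) auto
  moreover have "vertex_sum {a} \<tau> u = (if snd a = u then int (\<tau> a) else 0) - (if fst a = u then int (\<tau> a) else 0)"
  proof -
    have h1: "{b\<in>{a}. snd b = u} = (if snd a = u then {a} else {})" by auto
    have h2: "{b\<in>{a}. fst b = u} = (if fst a = u then {a} else {})" by auto
    show ?thesis unfolding vertex_sum_def h1 h2 by simp
  qed
  ultimately show ?thesis by simp
qed

lemma new_label:
  assumes "bij_betw \<tau>' D' {1..card D'}" "D \<subseteq> D'" "bij_betw \<tau> D {1..card D}"
    "\<forall>a\<in>D. \<tau>' a = \<tau> a" "a \<in> D'" "a \<notin> D"
  shows "\<tau>' a > card D"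
proof (rule ccontr)
  assume "\<not> ?thesis"
  moreover have "\<tau>' a \<ge> 1" using assms(1,5) by (auto simp: bij_betw_def)
  ultimately have "\<tau>' a \<in> \<tau> ` D" using assms(3) by (auto simp: bij_betw_def)
  then obtain b where b: "b \<in> D" "\<tau> b = \<tau>' a" by auto
  then have "\<tau>' b = \<tau>' a" using assms(4) by auto
  then have "b = a" using assms(1,2,5) b(1) by (auto simp: bij_betw_def inj_on_def)
  then show False using b assms(6) by simp
qed

lemma label_le:
  assumes "bij_betw \<tau> D {1..card D}" "a \<in> D"
  shows "\<tau> a \<le> card D" "\<tau> a \<ge> 1"
  using assms by (auto simp: bij_betw_def)

lemma orient_from_bij:
  assumes "bij_betw (\<lambda>a. {fst a, snd a}) D E"
  shows "is_orientation E D"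
  unfolding is_orientation_def
proof (intro conjI ballI)
  fix p assume "p \<in> D"
  then have "{fst p, snd p} \<in> E" using assms by (auto simp: bij_betw_def)
  then show "case p of (u, v) \<Rightarrow> {u, v} \<in> E" by (cases p) simp
next
  fix e assume "e \<in> E"
  then obtain a where a: "a \<in> D" "e = {fst a, snd a}" using assms by (auto simp: bij_betw_def)
  show "\<exists>!a. a \<in> D \<and> e = {fst a, snd a}"
  proof (rule ex1I[of _ a])
    show "a \<in> D \<and> e = {fst a, snd a}" using a by simp
    fix b assume "b \<in> D \<and> e = {fst b, snd b}"
    then show "b = a" using a assms by (auto simp: bij_betw_def inj_on_def)
  qed
qed



lemma lab_insert:
  assumes "finite D" "bij_betw \<tau> D {1..card D}" "a \<notin> D"
  shows "bij_betw (\<tau>(a := Suc (card D))) (insert a D) {1..card (insert a D)}"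
proof -
  have 1: "bij_betw (\<tau>(a := Suc (card D))) D {1..card D}"
    by (rule bij_betw_cong[THEN iffD2, OF _ assms(2)]) (use assms(3) in auto)
  have 2: "bij_betw (\<tau>(a := Suc (card D))) {a} {Suc (card D)}" by simp
  have "bij_betw (\<tau>(a := Suc (card D))) (D \<union> {a}) ({1..card D} \<union> {Suc (card D)})"
    by (rule bij_betw_combine[OF 1 2]) auto
  moreover have "{1..card D} \<union> {Suc (card D)} = {1..card (insert a D)}" using assms by auto
  ultimately show ?thesis by simp
qed

lemma edge_other:
  assumes "e = {u, v}" "u \<noteq> v" "z \<in> e"
  shows "\<exists>w. w \<noteq> z \<and> e = {w, z}"
  using assms by auto

lemma add_arc:
  assumes fin: "finite F" and e: "e \<in> F" "e = {w, y}" "w \<noteq> y"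
    and D0: "finite D0" "bij_betw \<tau>0 D0 {1..card D0}" "bij_betw (\<lambda>a. {fst a, snd a}) D0 (F - {e})"
  shows "\<exists>\<tau>. finite (insert (w,y) D0) \<and> bij_betw \<tau> (insert (w,y) D0) {1..card (insert (w,y) D0)}
     \<and> bij_betw (\<lambda>a. {fst a, snd a}) (insert (w,y) D0) F
     \<and> (\<forall>u. vertex_sum (insert (w,y) D0) \<tau> u = vertex_sum D0 \<tau>0 u
       + (if y = u then int (card F) else 0) - (if w = u then int (card F) else 0))"
proof -
  have cF: "card F \<ge> 1"
  proof -
    have "F \<noteq> {}" using e(1) by auto
    then have "card F > 0" using fin by (simp add: card_gt_0_iff)
    then show ?thesis by simp
  qed
  have cD0: "card D0 = card F - 1"
  proof -
    have "card D0 = card (F - {e})" using D0(3) by (rule bij_betw_same_card)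
    also have "\<dots> = card F - 1" using e(1) fin by simp
    finally show ?thesis .
  qed
  let ?a = "(w, y)"
  have anot: "?a \<notin> D0"
  proof
    assume "?a \<in> D0"
    then have "(\<lambda>a. {fst a, snd a}) ?a \<in> (\<lambda>a. {fst a, snd a}) ` D0" by (rule imageI)
    then have "{w, y} \<in> F - {e}" using bij_betw_imp_surj_on[OF D0(3)] by simp
    then show False using e(2) by simp
  qed
  define \<tau> where "\<tau> = \<tau>0(?a := Suc (card D0))"
  have t: "\<tau> ?a = card F" using cD0 cF unfolding \<tau>_def by simp
  have vs: "vertex_sum (insert ?a D0) \<tau> u = vertex_sum D0 \<tau>0 u
     + (if y = u then int (card F) else 0) - (if w = u then int (card F) else 0)" for u
  proof -
    have vc: "vertex_sum D0 \<tau> u = vertex_sum D0 \<tau>0 u"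
      using anot unfolding \<tau>_def by (intro vs_cong) auto
    have "vertex_sum (insert ?a D0) \<tau> u = vertex_sum D0 \<tau> u
      + (if snd ?a = u then int (\<tau> ?a) else 0) - (if fst ?a = u then int (\<tau> ?a) else 0)"
      by (rule vs_insert[OF D0(1) anot])
    then show ?thesis unfolding vc t fst_conv snd_conv .
  qed
  have bij: "bij_betw (\<lambda>a. {fst a, snd a}) (insert ?a D0) F"
  proof -
    have "bij_betw (\<lambda>a. {fst a, snd a}) (D0 \<union> {?a}) ((F - {e}) \<union> {e})"
    proof (rule bij_betw_combine[OF D0(3)])
      show "bij_betw (\<lambda>a. {fst a, snd a}) {?a} {e}" using e(2) by (simp add: bij_betw_def)
      show "(F - {e}) \<inter> {e} = {}" by simp
    qed
    moreover have "(F - {e}) \<union> {e} = F" using e by auto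
    ultimately show ?thesis by simp
  qed
  show ?thesis
  proof (intro exI conjI allI)
    show "finite (insert ?a D0)" using D0 by simp
    show "bij_betw \<tau> (insert ?a D0) {1..card (insert ?a D0)}"
      unfolding \<tau>_def by (rule lab_insert[OF D0(1,2) anot])
    show "bij_betw (\<lambda>a. {fst a, snd a}) (insert ?a D0) F" by (rule bij)
    fix u show "vertex_sum (insert ?a D0) \<tau> u = vertex_sum D0 \<tau>0 u
     + (if y = u then int (card F) else 0) - (if w = u then int (card F) else 0)" by (rule vs)
  qed
qed

lemma inner_orient:
  assumes "finite F" "\<forall>e\<in>F. \<exists>u v. e = {u,v} \<and> u \<noteq> v"
  shows "\<exists>D \<tau>. finite D \<and> bij_betw \<tau> D {1..card D} \<and> bij_betw (\<lambda>a. {fst a, snd a}) D F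
     \<and> (\<forall>u. vertex_sum D \<tau> u \<ge> - int (card F)) \<and> vertex_sum D \<tau> z \<ge> 0"
  using assms(1,2)
proof (induction F arbitrary: z rule: finite_remove_induct)
  case empty
  show ?case
  proof (intro exI conjI allI)
    show "finite {}" by simp
    show "bij_betw (\<lambda>_. 0::nat) {} {1..card ({}::('a\<times>'a) set)}" by (simp add: bij_betw_def)
    show "bij_betw (\<lambda>a. {fst a, snd a}) ({}::('a\<times>'a) set) {}" by (simp add: bij_betw_def)
    fix u
    show "vertex_sum {} (\<lambda>_. 0::nat) u \<ge> - int (card ({}::'a set set))" by (simp add: vertex_sum_def)
  next
    show "vertex_sum {} (\<lambda>_. 0::nat) z \<ge> 0" by (simp add: vertex_sum_def)
  qed
next
  case (remove F)
  note fin = \<open>finite F\<close>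
  have cF: "card F \<ge> 1"
  proof -
    have "card F > 0" using fin \<open>F \<noteq> {}\<close> by (simp add: card_gt_0_iff)
    then show ?thesis by simp
  qed
  have IH: "\<exists>D \<tau>. finite D \<and> bij_betw \<tau> D {1..card D} \<and> bij_betw (\<lambda>a. {fst a, snd a}) D (F - {e})
     \<and> (\<forall>u. vertex_sum D \<tau> u \<ge> - int (card (F - {e}))) \<and> vertex_sum D \<tau> z' \<ge> 0"
    if "e \<in> F" for e z'
  proof -
    have pe: "\<forall>e'\<in>F - {e}. \<exists>u v. e' = {u,v} \<and> u \<noteq> v" using remove.prems by blast
    show ?thesis using remove.IH[OF that pe] by blast
  qed
  have cFe: "int (card (F - {e})) = int (card F) - 1" if "e \<in> F" for e
    using that fin cF by simp
  show ?case
  proof (cases "\<exists>e\<in>F. z \<in> e")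
    case True
    then obtain e where e: "e \<in> F" "z \<in> e" by auto
    obtain u1 v1 where uv: "e = {u1, v1}" "u1 \<noteq> v1" using remove.prems e(1) by blast
    obtain w where w: "w \<noteq> z" "e = {w, z}" using edge_other[OF uv e(2)] by blast
    obtain D0 \<tau>0 where D0: "finite D0" "bij_betw \<tau>0 D0 {1..card D0}"
      "bij_betw (\<lambda>a. {fst a, snd a}) D0 (F - {e})"
      "\<forall>u. vertex_sum D0 \<tau>0 u \<ge> - int (card (F - {e}))" "vertex_sum D0 \<tau>0 w \<ge> 0"
      using IH[OF e(1), of w] by blast
    obtain \<tau> where T: "finite (insert (w,z) D0)" "bij_betw \<tau> (insert (w,z) D0) {1..card (insert (w,z) D0)}"
      "bij_betw (\<lambda>a. {fst a, snd a}) (insert (w,z) D0) F"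
      "\<forall>u. vertex_sum (insert (w,z) D0) \<tau> u = vertex_sum D0 \<tau>0 u
       + (if z = u then int (card F) else 0) - (if w = u then int (card F) else 0)"
      using add_arc[OF fin e(1) w(2) w(1) D0(1,2,3)] by blast
    show ?thesis
    proof (intro exI conjI allI)
      show "finite (insert (w,z) D0)" by (rule T(1))
      show "bij_betw \<tau> (insert (w,z) D0) {1..card (insert (w,z) D0)}" by (rule T(2))
      show "bij_betw (\<lambda>a. {fst a, snd a}) (insert (w,z) D0) F" by (rule T(3))
      fix u
      show "vertex_sum (insert (w,z) D0) \<tau> u \<ge> - int (card F)"
      proof (cases "u = w")
        case True
        then show ?thesis using T(4)[rule_format, of u] D0(5) w(1) by simp
      next
        case False
        then show ?thesis using T(4)[rule_format, of u] D0(4)[rule_format, of u] cFe[OF e(1)]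
          by (cases "z = u") simp_all
      qed
    next
      show "vertex_sum (insert (w,z) D0) \<tau> z \<ge> 0"
        using T(4)[rule_format, of z] D0(4)[rule_format, of z] cFe[OF e(1)] w(1) by simp
    qed
  next
    case False
    from \<open>F \<noteq> {}\<close> obtain e where e: "e \<in> F" by auto
    obtain w y where w: "e = {w, y}" "w \<noteq> y" using remove.prems e(1) by blast
    obtain D0 \<tau>0 where D0: "finite D0" "bij_betw \<tau>0 D0 {1..card D0}"
      "bij_betw (\<lambda>a. {fst a, snd a}) D0 (F - {e})"
      "\<forall>u. vertex_sum D0 \<tau>0 u \<ge> - int (card (F - {e}))" "vertex_sum D0 \<tau>0 w \<ge> 0"
      using IH[OF e(1), of w] by blast
    obtain \<tau> where T: "finite (insert (w,y) D0)" "bij_betw \<tau> (insert (w,y) D0) {1..card (insert (w,y) D0)}"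
      "bij_betw (\<lambda>a. {fst a, snd a}) (insert (w,y) D0) F"
      "\<forall>u. vertex_sum (insert (w,y) D0) \<tau> u = vertex_sum D0 \<tau>0 u
       + (if y = u then int (card F) else 0) - (if w = u then int (card F) else 0)"
      using add_arc[OF fin e(1) w(1) w(2) D0(1,2,3)] by blast
    show ?thesis
    proof (intro exI conjI allI)
      show "finite (insert (w,y) D0)" by (rule T(1))
      show "bij_betw \<tau> (insert (w,y) D0) {1..card (insert (w,y) D0)}" by (rule T(2))
      show "bij_betw (\<lambda>a. {fst a, snd a}) (insert (w,y) D0) F" by (rule T(3))
      fix u
      show "vertex_sum (insert (w,y) D0) \<tau> u \<ge> - int (card F)"
      proof (cases "u = w")
        case True
        then show ?thesis using T(4)[rule_format, of u] D0(5) w(2) by simp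
      next
        case False
        then show ?thesis using T(4)[rule_format, of u] D0(4)[rule_format, of u] cFe[OF e(1)]
          by (cases "y = u") simp_all
      qed
    next
      have "\<forall>a\<in>insert (w,y) D0. fst a \<noteq> z \<and> snd a \<noteq> z"
      proof
        fix a assume "a \<in> insert (w,y) D0"
        then have "{fst a, snd a} \<in> F" using T(3) by (auto simp: bij_betw_def)
        then show "fst a \<noteq> z \<and> snd a \<noteq> z" using False by auto
      qed
      then have "vertex_sum (insert (w,y) D0) \<tau> z = 0" by (rule vs_notouch)
      then show "vertex_sum (insert (w,y) D0) \<tau> z \<ge> 0" by simp
    qed
  qed
qed



lemma sa_formula:
  assumes finD: "finite D" and finS: "finite S" and Afin: "\<forall>v\<in>S. finite (A v)"
    and disj: "D \<inter> \<Union>(A ` S) = {}" and agree: "\<forall>a\<in>D. \<tau>' a = \<tau> a"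
    and shape: "\<forall>v\<in>S. \<forall>a\<in>A v. (if hh then snd a = v \<and> fst a \<notin> S else fst a = v \<and> snd a \<notin> S)"
    and w: "w \<in> S"
  shows "vertex_sum (D \<union> \<Union>(A ` S)) \<tau>' w
       = vertex_sum D \<tau> w + (if hh then 1 else -1) * (\<Sum>a\<in>A w. int (\<tau>' a))"
proof -
  let ?U = "\<Union>(A ` S)"
  have finU: "finite ?U" using finS Afin by auto
  have 1: "vertex_sum (D \<union> ?U) \<tau>' w = vertex_sum D \<tau>' w + vertex_sum ?U \<tau>' w"
    by (rule vs_Un[OF finD finU disj])
  have 2: "vertex_sum D \<tau>' w = vertex_sum D \<tau> w"
    using agree by (intro vs_cong) auto
  have 3: "vertex_sum ?U \<tau>' w = (if hh then 1 else -1) * (\<Sum>a\<in>A w. int (\<tau>' a))"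
  proof (cases hh)
    case True
    have h1: "{a\<in>?U. snd a = w} = A w"
    proof
      show "{a\<in>?U. snd a = w} \<subseteq> A w"
      proof
        fix a assume "a \<in> {a\<in>?U. snd a = w}"
        then obtain v where v: "v \<in> S" "a \<in> A v" "snd a = w" by auto
        then have "snd a = v" using shape True by auto
        then show "a \<in> A w" using v by simp
      qed
      show "A w \<subseteq> {a\<in>?U. snd a = w}" using shape True w by auto
    qed
    have h2: "{a\<in>?U. fst a = w} = {}" using shape True w by fastforce
    show ?thesis unfolding vertex_sum_def h1 h2 using True by simp
  next
    case False
    have h1: "{a\<in>?U. fst a = w} = A w"
    proof
      show "{a\<in>?U. fst a = w} \<subseteq> A w"
      proof
        fix a assume "a \<in> {a\<in>?U. fst a = w}"
        then obtain v where v: "v \<in> S" "a \<in> A v" "fst a = w" by auto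
        then have "fst a = v" using shape False by auto
        then show "a \<in> A w" using v by simp
      qed
      show "A w \<subseteq> {a\<in>?U. fst a = w}" using shape False w by auto
    qed
    have h2: "{a\<in>?U. snd a = w} = {}" using shape False w by fastforce
    show ?thesis unfolding vertex_sum_def h1 h2 using False by simp
  qed
  show ?thesis using 1 2 3 by simp
qed

lemma exists_max_elem:
  fixes \<kappa> :: "'a \<Rightarrow> int" and c :: "'a \<Rightarrow> nat"
  assumes "finite S" "S \<noteq> {}"
    and como: "\<forall>v\<in>S. \<forall>w\<in>S. (\<kappa> v \<le> \<kappa> w \<and> c v \<le> c w) \<or> (\<kappa> w \<le> \<kappa> v \<and> c w \<le> c v)"
  shows "\<exists>v\<in>S. \<forall>w\<in>S. \<kappa> w \<le> \<kappa> v \<and> c w \<le> c v"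
proof -
  define M where "M = Max (\<kappa> ` S)"
  have M: "M \<in> \<kappa> ` S" "\<forall>w\<in>S. \<kappa> w \<le> M" using assms(1,2) unfolding M_def by auto
  define S1 where "S1 = {v\<in>S. \<kappa> v = M}"
  have S1: "finite S1" "S1 \<noteq> {}" using M(1) assms(1) unfolding S1_def by auto
  define C where "C = Max (c ` S1)"
  have "C \<in> c ` S1" using S1 unfolding C_def by auto
  then obtain v where v: "v \<in> S1" "c v = C" by auto
  have C: "\<forall>w\<in>S1. c w \<le> C" using S1 unfolding C_def by auto
  show ?thesis
  proof (intro bexI ballI conjI)
    show "v \<in> S" using v S1_def by auto
    fix w assume w: "w \<in> S"
    show "\<kappa> w \<le> \<kappa> v" using M(2) w v S1_def by auto
    show "c w \<le> c v"
    proof (cases "\<kappa> w = M")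
      case True
      then show ?thesis using C w v S1_def by auto
    next
      case False
      then have "\<kappa> w < \<kappa> v" using M(2) w v S1_def by force
      then show ?thesis using como w \<open>v \<in> S\<close> by force
    qed
  qed
qed

lemma block_sa:
  fixes \<kappa> :: "'a \<Rightarrow> int" and A :: "'a \<Rightarrow> ('a \<times> 'a) set"
  assumes finD: "finite D" and labD: "bij_betw \<tau> D {1..card D}" and finS: "finite S"
    and Afin: "\<forall>v\<in>S. finite (A v) \<and> A v \<noteq> {} \<and> A v \<inter> D = {}"
    and Adisj: "\<forall>v\<in>S. \<forall>w\<in>S. v \<noteq> w \<longrightarrow> A v \<inter> A w = {}"
    and shape: "\<forall>v\<in>S. \<forall>a\<in>A v. (if hh then snd a = v \<and> fst a \<notin> S else fst a = v \<and> snd a \<notin> S)"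
    and como: "\<forall>v\<in>S. \<forall>w\<in>S. (\<kappa> v \<le> \<kappa> w \<and> card (A v) \<le> card (A w)) \<or> (\<kappa> w \<le> \<kappa> v \<and> card (A w) \<le> card (A v))"
    and kap: "\<forall>v\<in>S. \<kappa> v = (if hh then 1 else -1) * vertex_sum D \<tau> v"
  shows "\<exists>\<tau>'. bij_betw \<tau>' (D \<union> \<Union>(A ` S)) {1..card (D \<union> \<Union>(A ` S))} \<and> (\<forall>a\<in>D. \<tau>' a = \<tau> a)
     \<and> inj_on (vertex_sum (D \<union> \<Union>(A ` S)) \<tau>') S"
proof -
  let ?\<sigma> = "(if hh then 1 else -1) :: int"
  have \<sigma>\<sigma>: "?\<sigma> * ?\<sigma> = 1" by simp
  have main: "\<exists>\<tau>'. bij_betw \<tau>' (D \<union> \<Union>(A ` S')) {1..card (D \<union> \<Union>(A ` S'))} \<and> (\<forall>a\<in>D. \<tau>' a = \<tau> a)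
     \<and> inj_on (vertex_sum (D \<union> \<Union>(A ` S')) \<tau>') S'" if "S' \<subseteq> S" for S'
    using finite_subset[OF that finS] that
  proof (induction S' rule: finite_remove_induct)
    case empty
    show ?case by (rule exI[of _ \<tau>]) (use labD in simp)
  next
    case (remove S')
    have sub: "S' \<subseteq> S" by fact
    obtain v where v: "v \<in> S'" "\<forall>w\<in>S'. \<kappa> w \<le> \<kappa> v \<and> card (A w) \<le> card (A v)"
      using exists_max_elem[of S' \<kappa> "\<lambda>v. card (A v)"] remove.hyps como sub by blast
    have "S' - {v} \<subseteq> S" using sub by auto
    then obtain \<tau>1 where T1: "bij_betw \<tau>1 (D \<union> \<Union>(A ` (S' - {v}))) {1..card (D \<union> \<Union>(A ` (S' - {v})))}"
      "\<forall>a\<in>D. \<tau>1 a = \<tau> a" "inj_on (vertex_sum (D \<union> \<Union>(A ` (S' - {v}))) \<tau>1) (S' - {v})"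
      using remove.IH[OF v(1)] by blast
    define D1 where "D1 = D \<union> \<Union>(A ` (S' - {v}))"
    have finS': "finite S'" by fact
    have vS: "v \<in> S" using v(1) sub by auto
    have finAv: "finite (A v)" "A v \<noteq> {}" using Afin vS by auto
    have finD1: "finite D1" unfolding D1_def using finD finS' Afin sub by auto
    have disj1: "D1 \<inter> A v = {}"
    proof -
      have "A v \<inter> D = {}" using Afin vS by auto
      moreover have "A w \<inter> A v = {}" if "w \<in> S' - {v}" for w using Adisj that sub vS by auto
      ultimately show ?thesis unfolding D1_def by blast
    qed
    have D'eq: "D \<union> \<Union>(A ` S') = D1 \<union> A v" unfolding D1_def using v(1) by blast
    have cD': "card (D1 \<union> A v) = card D1 + card (A v)"
      using card_Un_disjoint[OF finD1 finAv(1) disj1] .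
    obtain g where g: "bij_betw g (A v) {Suc (card D1)..card D1 + card (A v)}"
    proof -
      have "card (A v) = card {Suc (card D1)..card D1 + card (A v)}" by simp
      then have "\<exists>g. bij_betw g (A v) {Suc (card D1)..card D1 + card (A v)}"
        using bij_betw_iff_card[OF finAv(1), of "{Suc (card D1)..card D1 + card (A v)}"] by simp
      then show ?thesis using that by blast
    qed
    define \<tau>' where "\<tau>' = (\<lambda>a. if a \<in> A v then g a else \<tau>1 a)"
    have agree1: "\<forall>a\<in>D1. \<tau>' a = \<tau>1 a" unfolding \<tau>'_def using disj1 by auto
    have bij': "bij_betw \<tau>' (D1 \<union> A v) {1..card (D1 \<union> A v)}"
    proof -
      have b1: "bij_betw \<tau>' D1 {1..card D1}"
        by (rule bij_betw_cong[THEN iffD2, OF _ T1(1)[folded D1_def]]) (use agree1 in auto)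
      have b2: "bij_betw \<tau>' (A v) {Suc (card D1)..card D1 + card (A v)}"
        by (rule bij_betw_cong[THEN iffD2, OF _ g]) (simp add: \<tau>'_def)
      have "bij_betw \<tau>' (D1 \<union> A v) ({1..card D1} \<union> {Suc (card D1)..card D1 + card (A v)})"
        by (rule bij_betw_combine[OF b1 b2]) auto
      moreover have "{1..card D1} \<union> {Suc (card D1)..card D1 + card (A v)} = {1..card (D1 \<union> A v)}"
        unfolding cD' by auto
      ultimately show ?thesis by simp
    qed
    have agreeD: "\<forall>a\<in>D. \<tau>' a = \<tau> a" using agree1 T1(2) unfolding D1_def by auto
    have disjS': "D \<inter> \<Union>(A ` S') = {}" using Afin sub by auto
    have shapeS': "\<forall>v\<in>S'. \<forall>a\<in>A v. (if hh then snd a = v \<and> fst a \<notin> S' else fst a = v \<and> snd a \<notin> S')"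
      using shape sub by (auto split: if_splits)
    have form: "vertex_sum (D1 \<union> A v) \<tau>' w = vertex_sum D \<tau> w + ?\<sigma> * (\<Sum>a\<in>A w. int (\<tau>' a))"
      if "w \<in> S'" for w
    proof -
      have "\<forall>v\<in>S'. finite (A v)" using Afin sub by auto
      from sa_formula[OF finD finS' this disjS' agreeD shapeS' that] show ?thesis unfolding D'eq .
    qed
    have sform: "?\<sigma> * vertex_sum (D1 \<union> A v) \<tau>' w = \<kappa> w + (\<Sum>a\<in>A w. int (\<tau>' a))"
      if "w \<in> S'" for w
    proof -
      have "?\<sigma> * vertex_sum (D1 \<union> A v) \<tau>' w = ?\<sigma> * vertex_sum D \<tau> w + (?\<sigma> * ?\<sigma>) * (\<Sum>a\<in>A w. int (\<tau>' a))"
        unfolding form[OF that] by (simp add: algebra_simps)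
      then show ?thesis using kap that sub \<sigma>\<sigma> by auto
    qed
    have less: "vertex_sum (D1 \<union> A v) \<tau>' w \<noteq> vertex_sum (D1 \<union> A v) \<tau>' v" if w: "w \<in> S'" "w \<noteq> v" for w
    proof -
      have Aw: "A w \<subseteq> D1" unfolding D1_def using w by auto
      have "(\<Sum>a\<in>A w. int (\<tau>' a)) \<le> int (card (A w)) * int (card D1)"
      proof -
        have "\<And>a. a \<in> A w \<Longrightarrow> int (\<tau>' a) \<le> int (card D1)"
          using Aw agree1 label_le(1)[OF T1(1)[folded D1_def]] by fastforce
        then show ?thesis using sum_bounded_above[of "A w" "\<lambda>a. int (\<tau>' a)" "int (card D1)"] by simp
      qed
      also have "\<dots> \<le> int (card (A v)) * int (card D1)"
        using v(2) w(1) by (simp add: mult_right_mono)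
      also have "\<dots> < int (card (A v)) * (int (card D1) + 1)"
      proof -
        have "card (A v) > 0" using finAv by (simp add: card_gt_0_iff)
        then show ?thesis by simp
      qed
      also have "\<dots> \<le> (\<Sum>a\<in>A v. int (\<tau>' a))"
      proof -
        have "int (card D1) + 1 \<le> int (\<tau>' a)" if "a \<in> A v" for a
        proof -
          have "g a \<in> {Suc (card D1)..card D1 + card (A v)}" using g that by (auto simp: bij_betw_def)
          then show ?thesis using that unfolding \<tau>'_def by simp
        qed
        then show ?thesis using sum_bounded_below[of "A v" "int (card D1) + 1" "\<lambda>a. int (\<tau>' a)"] by simp
      qed
      finally have lt: "(\<Sum>a\<in>A w. int (\<tau>' a)) < (\<Sum>a\<in>A v. int (\<tau>' a))" .
      have "\<kappa> w \<le> \<kappa> v" using v(2) w(1) by auto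
      then have "?\<sigma> * vertex_sum (D1 \<union> A v) \<tau>' w < ?\<sigma> * vertex_sum (D1 \<union> A v) \<tau>' v"
        using sform[OF w(1)] sform[OF v(1)] lt by simp
      then show ?thesis by auto
    qed
    have inj': "inj_on (vertex_sum (D1 \<union> A v) \<tau>') S'"
    proof (rule inj_onI)
      fix w1 w2 assume w12: "w1 \<in> S'" "w2 \<in> S'" "vertex_sum (D1 \<union> A v) \<tau>' w1 = vertex_sum (D1 \<union> A v) \<tau>' w2"
      show "w1 = w2"
      proof (cases "w1 = v \<or> w2 = v")
        case True
        then show ?thesis using less w12 by metis
      next
        case False
        have red: "vertex_sum (D1 \<union> A v) \<tau>' w = vertex_sum D1 \<tau>1 w" if "w \<in> S'" "w \<noteq> v" for w
        proof -
          have "vertex_sum (D1 \<union> A v) \<tau>' w = vertex_sum D1 \<tau>' w + vertex_sum (A v) \<tau>' w"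
            by (rule vs_Un[OF finD1 finAv(1) disj1])
          moreover have "vertex_sum D1 \<tau>' w = vertex_sum D1 \<tau>1 w" using agree1 by (intro vs_cong) auto
          moreover have "vertex_sum (A v) \<tau>' w = 0"
          proof (rule vs_notouch, rule ballI)
            fix a assume "a \<in> A v"
            then show "fst a \<noteq> w \<and> snd a \<noteq> w" using shapeS' v(1) that by (auto split: if_splits)
          qed
          ultimately show ?thesis by simp
        qed
        have "vertex_sum D1 \<tau>1 w1 = vertex_sum D1 \<tau>1 w2" using red w12 False by metis
        then show ?thesis using T1(3)[folded D1_def] w12 False by (auto dest: inj_onD)
      qed
    qed
    show ?case
      by (rule exI[of _ \<tau>']) (use bij' agreeD inj' D'eq in simp)
  qed
  show ?thesis using main[of S] by simp
qed



lemma edgeD: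
  assumes "simple_graph V E" "{a, b} \<in> E"
  shows "a \<noteq> b" "a \<in> V" "b \<in> V"
proof -
  obtain u v where uv: "{a, b} = {u, v}" "u \<noteq> v" "u \<in> V" "v \<in> V"
    using assms unfolding simple_graph_def by blast
  from uv(1) have "(a = u \<and> b = v) \<or> (a = v \<and> b = u)" by (simp add: doubleton_eq_iff)
  then show "a \<noteq> b" "a \<in> V" "b \<in> V" using uv by auto
qed

theorem lemma2p2:
  fixes V :: "'a set" and E :: "'a set set" and x :: 'a
  assumes "simple_graph V E"
    and "connected_graph V E"
    and "x \<in> V"
    and "degree E x = max_degree V E"
    and "max_degree V E + 2 \<le> card V"
    and "independent_set E (V - (neighbors E x \<union> {x}))"
  shows "has_antimagic_orientation V E"
proof -
  note sg = assms(1)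
  have finV: "finite V" using sg unfolding simple_graph_def by simp
  have Eall: "\<forall>e\<in>E. \<exists>u v. e = {u, v} \<and> u \<noteq> v \<and> u \<in> V \<and> v \<in> V"
    using sg unfolding simple_graph_def by (elim conjE)
  have Esub: "E \<subseteq> Pow V"
  proof
    fix e assume "e \<in> E"
    then obtain u v where "e = {u, v}" "u \<in> V" "v \<in> V" using Eall by meson
    then show "e \<in> Pow V" by simp
  qed
  have finE: "finite E" using finite_subset[OF Esub] finV by simp
  have Eform: "\<forall>e\<in>E. \<exists>u v. e = {u, v} \<and> u \<noteq> v" using Eall by meson
  define N where "N = neighbors E x"
  define R where "R = V - (N \<union> {x})"
  have NV: "N \<subseteq> V" unfolding N_def neighbors_def using edgeD[OF sg] by blast
  have finN: "finite N" using finite_subset[OF NV finV] .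
  have xN: "x \<notin> N" unfolding N_def neighbors_def using edgeD(1)[OF sg] by blast
  have finR: "finite R" unfolding R_def using finV by simp
  have RN: "R \<inter> N = {}" "x \<notin> R" unfolding R_def by auto
  have indep: "\<forall>u\<in>R. \<forall>v\<in>R. {u, v} \<notin> E" using assms(6) unfolding independent_set_def R_def N_def .
  have nbR: "u \<in> N" if "r \<in> R" "u \<in> neighbors E r" for r u
  proof -
    have e: "{u, r} \<in> E" using that(2) unfolding neighbors_def by simp
    have uV: "u \<in> V" using edgeD(2)[OF sg e] .
    have "u \<noteq> x"
    proof
      assume "u = x"
      then have "r \<in> N" using e unfolding N_def neighbors_def by (simp add: insert_commute)
      then show False using that(1) RN by auto
    qed
    moreover have "u \<notin> R" using indep that(1) e by auto
    ultimately show ?thesis using uV unfolding R_def by auto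
  qed
  have nbne: "neighbors E r \<noteq> {}" if "r \<in> R" for r
  proof -
    have rV: "r \<in> V" "r \<noteq> x" using that unfolding R_def by auto
    have "(r, x) \<in> {(a, b). {a, b} \<in> E}\<^sup>*" using assms(2) rV(1) assms(3) unfolding connected_graph_def by blast
    then obtain y where "(r, y) \<in> {(a, b). {a, b} \<in> E}"
      by (rule converse_rtranclE) (use rV(2) in auto)
    then have "{y, r} \<in> E" by (simp add: insert_commute)
    then show ?thesis unfolding neighbors_def by auto
  qed
  have finnb: "finite (neighbors E r)" if "r \<in> V" for r
  proof -
    have "neighbors E r \<subseteq> V" unfolding neighbors_def using edgeD(2)[OF sg] by blast
    then show ?thesis using finite_subset finV by blast
  qed
  have degle: "card (neighbors E r) \<le> card N" if "r \<in> V" for r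
  proof -
    have "degree E r \<le> max_degree V E" unfolding max_degree_def using finV that by simp
    then show ?thesis using assms(4) unfolding degree_def N_def by simp
  qed
  define I where "I = {e\<in>E. e \<subseteq> N}"
  define T where "T = {e\<in>E. e \<inter> R \<noteq> {}}"
  define X where "X = {e\<in>E. x \<in> e}"
  have finI: "finite I" unfolding I_def using finE by simp
  have Iform: "\<forall>e\<in>I. \<exists>u v. e = {u, v} \<and> u \<noteq> v" using Eform unfolding I_def by blast
  obtain DI \<tau>I where DI: "finite DI" "bij_betw \<tau>I DI {1..card DI}" "bij_betw (\<lambda>a. {fst a, snd a}) DI I"
    "\<forall>u. vertex_sum DI \<tau>I u \<ge> - int (card I)"
    using inner_orient[OF finI Iform, of x] by blast
  have DIN: "fst a \<in> N \<and> snd a \<in> N" if "a \<in> DI" for a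
  proof -
    have "{fst a, snd a} \<in> I" using DI(3) that by (auto simp: bij_betw_def)
    then show ?thesis unfolding I_def by auto
  qed
  have cDI: "card DI = card I" using DI(3) by (rule bij_betw_same_card)
  define AT where "AT = (\<lambda>r. (\<lambda>u. (r, u)) ` neighbors E r)"
  have RV: "R \<subseteq> V" unfolding R_def by auto
  have AT1: "\<forall>v\<in>R. finite (AT v) \<and> AT v \<noteq> {} \<and> AT v \<inter> DI = {}"
  proof
    fix v assume v: "v \<in> R"
    have "finite (AT v)" unfolding AT_def using finnb v RV by auto
    moreover have "AT v \<noteq> {}" unfolding AT_def using nbne[OF v] by simp
    moreover have "AT v \<inter> DI = {}" unfolding AT_def using DIN v RN by fastforce
    ultimately show "finite (AT v) \<and> AT v \<noteq> {} \<and> AT v \<inter> DI = {}" by simp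
  qed
  have AT2: "\<forall>v\<in>R. \<forall>w\<in>R. v \<noteq> w \<longrightarrow> AT v \<inter> AT w = {}" unfolding AT_def by auto
  have AT3: "\<forall>v\<in>R. \<forall>a\<in>AT v. (if False then snd a = v \<and> fst a \<notin> R else fst a = v \<and> snd a \<notin> R)"
    unfolding AT_def using nbR RN by fastforce
  have AT4: "\<forall>v\<in>R. \<forall>w\<in>R. (((\<lambda>_. 0::int) v) \<le> (\<lambda>_. 0) w \<and> card (AT v) \<le> card (AT w))
      \<or> ((\<lambda>_. 0::int) w \<le> (\<lambda>_. 0) v \<and> card (AT w) \<le> card (AT v))" by auto
  have AT5: "\<forall>v\<in>R. (\<lambda>_. 0::int) v = (if False then 1 else -1) * vertex_sum DI \<tau>I v"
  proof
    fix v assume v: "v \<in> R"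
    have "vertex_sum DI \<tau>I v = 0" using DIN v RN by (intro vs_notouch) fastforce
    then show "(\<lambda>_. 0::int) v = (if False then 1 else -1) * vertex_sum DI \<tau>I v" by simp
  qed
  define D1 where "D1 = DI \<union> \<Union>(AT ` R)"
  obtain \<tau>T where TT: "bij_betw \<tau>T D1 {1..card D1}" "\<forall>a\<in>DI. \<tau>T a = \<tau>I a" "inj_on (vertex_sum D1 \<tau>T) R"
    using block_sa[OF DI(1) DI(2) finR AT1 AT2 AT3 AT4 AT5] unfolding D1_def by blast
  define AX where "AX = (\<lambda>v::'a. {(x, v)})"
  have finD1: "finite D1" unfolding D1_def using DI(1) finR AT1 by auto
  have AX1: "\<forall>v\<in>N. finite (AX v) \<and> AX v \<noteq> {} \<and> AX v \<inter> D1 = {}"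
    unfolding AX_def D1_def AT_def using DIN xN RN by fastforce
  have AX2: "\<forall>v\<in>N. \<forall>w\<in>N. v \<noteq> w \<longrightarrow> AX v \<inter> AX w = {}" unfolding AX_def by auto
  have AX3: "\<forall>v\<in>N. \<forall>a\<in>AX v. (if True then snd a = v \<and> fst a \<notin> N else fst a = v \<and> snd a \<notin> N)"
    unfolding AX_def using xN by simp
  have AX4: "\<forall>v\<in>N. \<forall>w\<in>N. (vertex_sum D1 \<tau>T v \<le> vertex_sum D1 \<tau>T w \<and> card (AX v) \<le> card (AX w))
      \<or> (vertex_sum D1 \<tau>T w \<le> vertex_sum D1 \<tau>T v \<and> card (AX w) \<le> card (AX v))"
    unfolding AX_def by auto
  have AX5: "\<forall>v\<in>N. vertex_sum D1 \<tau>T v = (if True then 1 else -1) * vertex_sum D1 \<tau>T v" by simp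
  define D2 where "D2 = D1 \<union> \<Union>(AX ` N)"
  obtain \<tau>F where TF: "bij_betw \<tau>F D2 {1..card D2}" "\<forall>a\<in>D1. \<tau>F a = \<tau>T a" "inj_on (vertex_sum D2 \<tau>F) N"
    using block_sa[OF finD1 TT(1) finN AX1 AX2 AX3 AX4 AX5] unfolding D2_def by blast
  have D1D2: "D1 \<subseteq> D2" unfolding D2_def by auto
  have DID1: "DI \<subseteq> D1" unfolding D1_def by auto
  have ATfin: "\<forall>v\<in>R. finite (AT v)" using AT1 by auto
  have ATdisj: "DI \<inter> \<Union>(AT ` R) = {}" using AT1 by auto
  have AXfin: "\<forall>v\<in>N. finite (AX v)" using AX1 by auto
  have AXdisj: "D1 \<inter> \<Union>(AX ` N) = {}" using AX1 by auto
  have UX: "\<Union>(AX ` N) = (\<lambda>v. (x, v)) ` N" unfolding AX_def by auto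
  have finUT: "finite (\<Union>(AT ` R))" using ATfin finR by auto
  have finUX: "finite (\<Union>(AX ` N))" using AXfin finN by auto
  have bijT: "bij_betw (\<lambda>a. {fst a, snd a}) (\<Union>(AT ` R)) T"
  proof -
    have inj: "inj_on (\<lambda>a. {fst a, snd a}) (\<Union>(AT ` R))"
    proof (rule inj_onI)
      fix a b assume a: "a \<in> \<Union>(AT ` R)" and b: "b \<in> \<Union>(AT ` R)" and ab: "{fst a, snd a} = {fst b, snd b}"
      obtain r u where ru: "a = (r, u)" "r \<in> R" "u \<in> neighbors E r" using a unfolding AT_def by auto
      obtain r' u' where ru': "b = (r', u')" "r' \<in> R" "u' \<in> neighbors E r'" using b unfolding AT_def by auto
      have "u' \<notin> R" using nbR[OF ru'(2,3)] RN by auto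
      moreover have "{r, u} = {r', u'}" using ab ru ru' by simp
      ultimately have "r = r' \<and> u = u'" using ru(2) by (auto simp: doubleton_eq_iff)
      then show "a = b" using ru ru' by simp
    qed
    have img: "(\<lambda>a. {fst a, snd a}) ` (\<Union>(AT ` R)) = T"
    proof
      show "(\<lambda>a. {fst a, snd a}) ` (\<Union>(AT ` R)) \<subseteq> T"
      proof
        fix e assume "e \<in> (\<lambda>a. {fst a, snd a}) ` (\<Union>(AT ` R))"
        then obtain r u where ru: "e = {r, u}" "r \<in> R" "u \<in> neighbors E r" unfolding AT_def by auto
        have "{u, r} \<in> E" using ru(3) unfolding neighbors_def by simp
        then show "e \<in> T" unfolding T_def using ru by (auto simp: insert_commute)
      qed
      show "T \<subseteq> (\<lambda>a. {fst a, snd a}) ` (\<Union>(AT ` R))"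
      proof
        fix e assume e: "e \<in> T"
        then obtain r where r: "r \<in> e" "r \<in> R" unfolding T_def by auto
        obtain u v where uv: "e = {u, v}" "u \<noteq> v" using Eform[rule_format, of e] e unfolding T_def by blast
        obtain w where w: "w \<noteq> r" "e = {w, r}" using edge_other[OF uv r(1)] by blast
        have "w \<in> neighbors E r" using e w unfolding T_def neighbors_def by simp
        then have "(r, w) \<in> \<Union>(AT ` R)" unfolding AT_def using r by auto
        moreover have "e = {fst (r, w), snd (r, w)}" using w by (simp add: insert_commute)
        ultimately show "e \<in> (\<lambda>a. {fst a, snd a}) ` (\<Union>(AT ` R))" by blast
      qed
    qed
    show ?thesis using inj img by (simp add: bij_betw_def)
  qed
  have bijX: "bij_betw (\<lambda>a. {fst a, snd a}) (\<Union>(AX ` N)) X"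
  proof -
    have inj: "inj_on (\<lambda>a. {fst a, snd a}) ((\<lambda>v. (x, v)) ` N)"
      by (rule inj_onI) (auto simp: doubleton_eq_iff)
    have img: "(\<lambda>a. {fst a, snd a}) ` ((\<lambda>v. (x, v)) ` N) = X"
    proof
      show "(\<lambda>a. {fst a, snd a}) ` ((\<lambda>v. (x, v)) ` N) \<subseteq> X"
        unfolding X_def N_def neighbors_def by (auto simp: insert_commute)
      show "X \<subseteq> (\<lambda>a. {fst a, snd a}) ` ((\<lambda>v. (x, v)) ` N)"
      proof
        fix e assume e: "e \<in> X"
        obtain u v where uv: "e = {u, v}" "u \<noteq> v" using Eform[rule_format, of e] e unfolding X_def by blast
        obtain w where w: "w \<noteq> x" "e = {w, x}" using edge_other[OF uv] e unfolding X_def by blast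
        have "w \<in> N" using e w unfolding X_def N_def neighbors_def by simp
        moreover have "e = {fst (x, w), snd (x, w)}" using w by (simp add: insert_commute)
        ultimately show "e \<in> (\<lambda>a. {fst a, snd a}) ` ((\<lambda>v. (x, v)) ` N)" by blast
      qed
    qed
    show ?thesis using inj img UX by (simp add: bij_betw_def)
  qed
  have IT: "I \<inter> T = {}" unfolding I_def T_def using RN by auto
  have ITX: "(I \<union> T) \<inter> X = {}"
  proof -
    have "e \<notin> X" if "e \<in> I \<union> T" for e
    proof
      assume eX: "e \<in> X"
      show False
      proof (cases "e \<in> I")
        case True
        then show False using eX xN unfolding I_def X_def by auto
      next
        case False
        then have eT: "e \<in> T" using that by simp
        then obtain r where r: "r \<in> e" "r \<in> R" unfolding T_def by auto
        obtain u v where uv: "e = {u, v}" "u \<noteq> v" using Eform[rule_format, of e] eT unfolding T_def by blast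
        obtain w where w: "w \<noteq> x" "e = {w, x}" using edge_other[OF uv] eX unfolding X_def by blast
        have "r = w" using r(1) w RN r(2) by auto
        then have "r \<in> N" using eT w unfolding T_def N_def neighbors_def by simp
        then show False using r(2) RN by auto
      qed
    qed
    then show ?thesis by blast
  qed
  have EU: "I \<union> T \<union> X = E"
  proof
    show "I \<union> T \<union> X \<subseteq> E" unfolding I_def T_def X_def by auto
    show "E \<subseteq> I \<union> T \<union> X"
    proof
      fix e assume e: "e \<in> E"
      show "e \<in> I \<union> T \<union> X"
      proof (cases "x \<in> e \<or> e \<inter> R \<noteq> {}")
        case True
        then show ?thesis using e unfolding T_def X_def by auto
      next
        case False
        have "e \<subseteq> V" using Esub e by auto
        then have "e \<subseteq> N" using False unfolding R_def by auto
        then show ?thesis using e unfolding I_def by auto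
      qed
    qed
  qed
  have bijE: "bij_betw (\<lambda>a. {fst a, snd a}) D2 E"
  proof -
    have "bij_betw (\<lambda>a. {fst a, snd a}) (DI \<union> \<Union>(AT ` R)) (I \<union> T)"
      by (rule bij_betw_combine[OF DI(3) bijT IT])
    then have "bij_betw (\<lambda>a. {fst a, snd a}) ((DI \<union> \<Union>(AT ` R)) \<union> \<Union>(AX ` N)) ((I \<union> T) \<union> X)"
      by (rule bij_betw_combine[OF _ bijX ITX])
    then show ?thesis unfolding D2_def D1_def EU .
  qed
  have orient: "is_orientation E D2" by (rule orient_from_bij[OF bijE])
  have cD1: "card DI \<le> card D1" using card_mono[OF finD1 DID1] .
  have sR: "vertex_sum D2 \<tau>F r = - (\<Sum>a\<in>AT r. int (\<tau>T a))" if r: "r \<in> R" for r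
  proof -
    have "vertex_sum D2 \<tau>F r = vertex_sum D1 \<tau>F r + vertex_sum (\<Union>(AX ` N)) \<tau>F r"
      unfolding D2_def by (rule vs_Un[OF finD1 finUX AXdisj])
    moreover have "vertex_sum D1 \<tau>F r = vertex_sum D1 \<tau>T r" using TF(2) by (intro vs_cong) auto
    moreover have "vertex_sum (\<Union>(AX ` N)) \<tau>F r = 0"
      using r RN unfolding UX by (intro vs_notouch) auto
    moreover have "vertex_sum D1 \<tau>T r = vertex_sum DI \<tau>I r + (if False then 1 else -1) * (\<Sum>a\<in>AT r. int (\<tau>T a))"
      unfolding D1_def by (rule sa_formula[OF DI(1) finR ATfin ATdisj TT(2) AT3 r])
    moreover have "vertex_sum DI \<tau>I r = 0" using DIN r RN by (intro vs_notouch) fastforce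
    ultimately show ?thesis by simp
  qed
  have sN: "vertex_sum D2 \<tau>F v \<ge> 1" if v: "v \<in> N" for v
  proof -
    have "vertex_sum D2 \<tau>F v = vertex_sum D1 \<tau>T v + (if True then 1 else -1) * (\<Sum>a\<in>AX v. int (\<tau>F a))"
      unfolding D2_def by (rule sa_formula[OF finD1 finN AXfin AXdisj TF(2) AX3 v])
    then have e1: "vertex_sum D2 \<tau>F v = vertex_sum D1 \<tau>T v + int (\<tau>F (x, v))" unfolding AX_def by simp
    have "\<tau>F (x, v) > card D1"
    proof (rule new_label[OF TF(1) D1D2 TT(1) TF(2)])
      show "(x, v) \<in> D2" unfolding D2_def AX_def using v by auto
      show "(x, v) \<notin> D1" using AX1 v unfolding AX_def by auto
    qed
    moreover have "vertex_sum D1 \<tau>T v \<ge> - int (card I)"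
    proof -
      have "vertex_sum D1 \<tau>T v = vertex_sum DI \<tau>T v + vertex_sum (\<Union>(AT ` R)) \<tau>T v"
        unfolding D1_def by (rule vs_Un[OF DI(1) finUT ATdisj])
      moreover have "vertex_sum DI \<tau>T v = vertex_sum DI \<tau>I v" using TT(2) by (intro vs_cong) auto
      moreover have "vertex_sum (\<Union>(AT ` R)) \<tau>T v \<ge> 0"
        using v RN unfolding AT_def by (intro vs_heads) auto
      ultimately show ?thesis using DI(4)[rule_format, of v] by linarith
    qed
    ultimately show ?thesis using e1 cD1 cDI by linarith
  qed
  have sX: "vertex_sum D2 \<tau>F x \<le> - (int (card N) * (int (card D1) + 1))"
  proof -
    have "vertex_sum D2 \<tau>F x = vertex_sum D1 \<tau>F x + vertex_sum (\<Union>(AX ` N)) \<tau>F x"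
      unfolding D2_def by (rule vs_Un[OF finD1 finUX AXdisj])
    moreover have "vertex_sum D1 \<tau>F x = 0"
    proof (rule vs_notouch, rule ballI)
      fix a assume "a \<in> D1"
      then show "fst a \<noteq> x \<and> snd a \<noteq> x"
        unfolding D1_def AT_def using DIN xN RN nbR by fastforce
    qed
    moreover have "vertex_sum (\<Union>(AX ` N)) \<tau>F x = - (\<Sum>a\<in>{a\<in>\<Union>(AX ` N). fst a = x}. int (\<tau>F a))"
      using xN unfolding UX by (intro vs_tails) auto
    moreover have "{a\<in>\<Union>(AX ` N). fst a = x} = \<Union>(AX ` N)" unfolding UX by auto
    moreover have "(\<Sum>a\<in>\<Union>(AX ` N). int (\<tau>F a)) \<ge> int (card N) * (int (card D1) + 1)"
    proof -
      have "int (card D1) + 1 \<le> int (\<tau>F a)" if "a \<in> \<Union>(AX ` N)" for a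
      proof -
        have "a \<in> D2" "a \<notin> D1" using that AXdisj unfolding D2_def by auto
        then have "\<tau>F a > card D1" by (rule new_label[OF TF(1) D1D2 TT(1) TF(2)])
        then show ?thesis by simp
      qed
      then have "int (card (\<Union>(AX ` N))) * (int (card D1) + 1) \<le> (\<Sum>a\<in>\<Union>(AX ` N). int (\<tau>F a))"
        using sum_bounded_below[of "\<Union>(AX ` N)" "int (card D1) + 1" "\<lambda>a. int (\<tau>F a)"] by simp
      moreover have "card (\<Union>(AX ` N)) = card N" unfolding UX by (rule card_image) (auto intro: inj_onI)
      ultimately show ?thesis by simp
    qed
    ultimately show ?thesis by simp
  qed
  have sRb: "vertex_sum D2 \<tau>F r \<le> -1 \<and> vertex_sum D2 \<tau>F r \<ge> - (int (card N) * int (card D1))"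
    if r: "r \<in> R" for r
  proof -
    have lab: "1 \<le> int (\<tau>T a) \<and> int (\<tau>T a) \<le> int (card D1)" if "a \<in> AT r" for a
    proof -
      have "a \<in> D1" unfolding D1_def using that r by auto
      then show ?thesis using label_le[OF TT(1)] by simp
    qed
    have ne: "AT r \<noteq> {}" "finite (AT r)" using AT1 r by auto
    have "int (card (AT r)) * 1 \<le> (\<Sum>a\<in>AT r. int (\<tau>T a))"
      using sum_bounded_below[of "AT r" 1 "\<lambda>a. int (\<tau>T a)"] lab by simp
    moreover have "card (AT r) \<ge> 1" using ne by (simp add: Suc_leI card_gt_0_iff)
    moreover have "(\<Sum>a\<in>AT r. int (\<tau>T a)) \<le> int (card (AT r)) * int (card D1)"
      using sum_bounded_above[of "AT r" "\<lambda>a. int (\<tau>T a)" "int (card D1)"] lab by simp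
    moreover have "card (AT r) \<le> card N"
    proof -
      have "card (AT r) = card (neighbors E r)" unfolding AT_def by (rule card_image) (auto intro: inj_onI)
      then show ?thesis using degle r RV by auto
    qed
    moreover have "int (card (AT r)) * int (card D1) \<le> int (card N) * int (card D1)"
      using calculation(4) by (simp add: mult_right_mono)
    ultimately show ?thesis using sR[OF r] by linarith
  qed
  have injR: "inj_on (vertex_sum D2 \<tau>F) R"
  proof (rule inj_onI)
    fix a b assume "a \<in> R" "b \<in> R" "vertex_sum D2 \<tau>F a = vertex_sum D2 \<tau>F b"
    moreover have "vertex_sum D2 \<tau>F r = vertex_sum D1 \<tau>T r" if "r \<in> R" for r
    proof -
      have "vertex_sum D1 \<tau>T r = vertex_sum DI \<tau>I r + (if False then 1 else -1) * (\<Sum>a\<in>AT r. int (\<tau>T a))"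
        unfolding D1_def by (rule sa_formula[OF DI(1) finR ATfin ATdisj TT(2) AT3 that])
      moreover have "vertex_sum DI \<tau>I r = 0" using DIN that RN by (intro vs_notouch) fastforce
      ultimately show ?thesis using sR[OF that] by simp
    qed
    ultimately show "a = b" using TT(3) by (metis inj_onD)
  qed
  have inj: "inj_on (vertex_sum D2 \<tau>F) V"
  proof (rule inj_onI)
    fix a b assume a: "a \<in> V" and b: "b \<in> V" and eq: "vertex_sum D2 \<tau>F a = vertex_sum D2 \<tau>F b"
    have cases_a: "a = x \<or> a \<in> N \<or> a \<in> R" using a unfolding R_def by auto
    have cases_b: "b = x \<or> b \<in> N \<or> b \<in> R" using b unfolding R_def by auto
    have NR: "card N \<ge> 1" if rR: "r \<in> R" for r
    proof -
      obtain u where "u \<in> neighbors E r" using nbne[OF rR] by auto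
      then have "u \<in> N" using nbR[OF rR] by simp
      then show ?thesis using finN by (metis One_nat_def Suc_leI card_gt_0_iff empty_iff)
    qed
    have xR: "vertex_sum D2 \<tau>F x < vertex_sum D2 \<tau>F r" if "r \<in> R" for r
    proof -
      have "int (card N) * (int (card D1) + 1) = int (card N) * int (card D1) + int (card N)"
        by (simp add: algebra_simps)
      then show ?thesis using sX sRb[OF that] NR[OF that] by linarith
    qed
    have xN': "vertex_sum D2 \<tau>F x < vertex_sum D2 \<tau>F v" if "v \<in> N" for v
    proof -
      have "int (card N) * (int (card D1) + 1) \<ge> 0" by simp
      then show ?thesis using sX sN[OF that] by linarith
    qed
    have RN': "vertex_sum D2 \<tau>F r < vertex_sum D2 \<tau>F v" if "r \<in> R" "v \<in> N" for r v
      using sRb[OF that(1)] sN[OF that(2)] by linarith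
    show "a = b"
      using cases_a cases_b eq xR xN' RN' TF(3) injR
      by (metis inj_onD less_irrefl)
  qed
  show ?thesis
    unfolding has_antimagic_orientation_def antimagic_labeling_def
    using orient TF(1) inj by blast
qed

end
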